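(* Let $X$ be a finite connected poset and $\varphi:I(X,\mathbb{Z}_2)\to I(X,\mathbb{Z}_2)$ a bijective additive map. Then $\varphi(E(I(X,\mathbb{Z}_2)))\subseteq E(I(X,\mathbb{Z}_2))$ if and only if $\varphi=\tau\circ\psi$ for some bijective shift map $\tau$ and some Lie automorphism $\psi$ of $I(X,\mathbb{Z}_2)$.
   Context: $I(X,\mathbb{Z}_2)$ is the incidence algebra of the locally finite poset $X$ over the two-element field: functions $f:X\times X\to\mathbb{Z}_2$ vanishing unless $x\le y$, with product $(fg)(x,y)=\sum_{x\le z\le y}f(x,z)g(z,y)$. A poset is connected if any two elements are joined by a finite sequence of elements in which consecutive elements are comparable. $E(A)$ denotes the idempotents of $A$. A shift map is an additive map $\tau:I(X,\mathbb{Z}_2)\to I(X,\mathbb{Z}_2)$ such that $\tau(f)-f$ lies in the center of $I(X,\mathbb{Z}_2)$ for all $f$. A Lie automorphism of $I(X,\mathbb{Z}_2)$ is a bijective additive map $\psi$ with $\psi(ab+ba)=\psi(a)\psi(b)+\psi(b)\psi(a)$ for all $a,b$. *)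

theory Defs
  imports Main "HOL-Library.Z2" "HOL-Library.Function_Algebras"
begin

text \<open>The finite poset X is the (finite) type 'a with its order; the field Z_2 is the type bit.
An element of the incidence algebra I(X,Z_2) is a function f :: 'a => 'a => bit with
f x y = 0 unless x <= y.\<close>

definition poset_connected :: "('a::order) itself \<Rightarrow> bool" where
  "poset_connected _ \<longleftrightarrow> (\<forall>x y::'a. (\<lambda>a b. a \<le> b \<or> b \<le> a)\<^sup>*\<^sup>* x y)"

definition IA :: "('a::order \<Rightarrow> 'a \<Rightarrow> bit) set" where
  "IA = {f. \<forall>x y. \<not> x \<le> y \<longrightarrow> f x y = 0}"

definition ia_mult :: "('a::{order,finite} \<Rightarrow> 'a \<Rightarrow> bit) \<Rightarrow> ('a \<Rightarrow> 'a \<Rightarrow> bit) \<Rightarrow> ('a \<Rightarrow> 'a \<Rightarrow> bit)" where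
  "ia_mult f g = (\<lambda>x y. if x \<le> y then (\<Sum>z\<in>{z. x \<le> z \<and> z \<le> y}. f x z * g z y) else 0)"

definition ia_center :: "('a::{order,finite} \<Rightarrow> 'a \<Rightarrow> bit) set" where
  "ia_center = {c \<in> IA. \<forall>f\<in>IA. ia_mult c f = ia_mult f c}"

definition ia_idempotents :: "('a::{order,finite} \<Rightarrow> 'a \<Rightarrow> bit) set" where
  "ia_idempotents = {e \<in> IA. ia_mult e e = e}"

text \<open>Additive self-map of I(X,Z_2) (values outside IA are irrelevant).\<close>
definition ia_additive :: "(('a::order \<Rightarrow> 'a \<Rightarrow> bit) \<Rightarrow> ('a \<Rightarrow> 'a \<Rightarrow> bit)) \<Rightarrow> bool" where
  "ia_additive \<phi> \<longleftrightarrow> \<phi> ` IA \<subseteq> IA \<and> (\<forall>f\<in>IA. \<forall>g\<in>IA. \<phi> (f + g) = \<phi> f + \<phi> g)"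

definition ia_bijective :: "(('a::order \<Rightarrow> 'a \<Rightarrow> bit) \<Rightarrow> ('a \<Rightarrow> 'a \<Rightarrow> bit)) \<Rightarrow> bool" where
  "ia_bijective \<phi> \<longleftrightarrow> bij_betw \<phi> IA IA"

definition shift_map :: "(('a::{order,finite} \<Rightarrow> 'a \<Rightarrow> bit) \<Rightarrow> ('a \<Rightarrow> 'a \<Rightarrow> bit)) \<Rightarrow> bool" where
  "shift_map \<tau> \<longleftrightarrow> ia_additive \<tau> \<and> (\<forall>f\<in>IA. \<tau> f - f \<in> ia_center)"

definition lie_automorphism :: "(('a::{order,finite} \<Rightarrow> 'a \<Rightarrow> bit) \<Rightarrow> ('a \<Rightarrow> 'a \<Rightarrow> bit)) \<Rightarrow> bool" where
  "lie_automorphism \<psi> \<longleftrightarrow> ia_additive \<psi> \<and> ia_bijective \<psi> \<and>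
     (\<forall>a\<in>IA. \<forall>b\<in>IA. \<psi> (ia_mult a b + ia_mult b a) = ia_mult (\<psi> a) (\<psi> b) + ia_mult (\<psi> b) (\<psi> a))"

end

theory Submission
  imports Defs
begin

lemma bit_add_self[simp]: "(x::bit) + x = 0"
  by (cases x) auto

lemma bit_mult_self[simp]: "(x::bit) * x = x"
  by (cases x) auto

declare mult_bit_eq_and[simp del] add_bit_eq_xor[simp del]

definition mm :: "('a::finite \<Rightarrow> 'a \<Rightarrow> bit) \<Rightarrow> ('a \<Rightarrow> 'a \<Rightarrow> bit) \<Rightarrow> ('a \<Rightarrow> 'a \<Rightarrow> bit)" where
  "mm f g = (\<lambda>x y. \<Sum>z\<in>UNIV. f x z * g z y)"

lemma IA_iff: "f \<in> IA \<longleftrightarrow> (\<forall>x y. \<not> x \<le> y \<longrightarrow> f x y = 0)"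
  by (simp add: IA_def)

lemma ia_mult_mm:
  fixes f g :: "'a::{order,finite} \<Rightarrow> 'a \<Rightarrow> bit"
  assumes "f \<in> IA" "g \<in> IA"
  shows "ia_mult f g = mm f g"
proof (rule ext, rule ext)
  fix x y :: 'a
  have z: "f x z * g z y = 0" if "z \<notin> {z. x \<le> z \<and> z \<le> y}" for z
    using that assms by (auto simp: IA_iff)
  show "ia_mult f g x y = mm f g x y"
  proof (cases "x \<le> y")
    case True
    have "(\<Sum>z\<in>{z. x \<le> z \<and> z \<le> y}. f x z * g z y) = (\<Sum>z\<in>UNIV. f x z * g z y)"
      by (rule sum.mono_neutral_left) (use z in auto)
    then show ?thesis unfolding ia_mult_def mm_def using True by simp
  next
    case False
    then have "\<forall>z\<in>UNIV. f x z * g z y = 0" using z by (auto dest: order_trans)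
    then have "(\<Sum>z\<in>UNIV. f x z * g z y) = 0" by (rule sum.neutral)
    then show ?thesis using False unfolding ia_mult_def mm_def by simp
  qed
qed

lemma mm_IA: 
  fixes f g :: "'a::{order,finite} \<Rightarrow> 'a \<Rightarrow> bit"
  assumes "f \<in> IA" "g \<in> IA" shows "mm f g \<in> IA"
  unfolding IA_iff
proof (intro allI impI)
  fix x y :: 'a assume n: "\<not> x \<le> y"
  have "f x z * g z y = 0" for z
  proof (cases "x \<le> z")
    case True
    then have "\<not> z \<le> y" using n order_trans by blast
    then show ?thesis using assms by (simp add: IA_iff)
  next
    case False
    then show ?thesis using assms by (simp add: IA_iff)
  qed
  then have "\<forall>z\<in>UNIV. f x z * g z y = 0" by blast
  then have "(\<Sum>z\<in>UNIV. f x z * g z y) = 0" by (rule sum.neutral)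
  then show "mm f g x y = 0" unfolding mm_def by simp
qed

lemma mm_assoc: "mm (mm f g) h = mm f (mm g h)"
proof (intro ext)
  fix x y
  have "mm (mm f g) h x y = (\<Sum>z\<in>UNIV. \<Sum>w\<in>UNIV. f x w * g w z * h z y)"
    by (simp add: mm_def sum_distrib_right)
  also have "\<dots> = (\<Sum>w\<in>UNIV. \<Sum>z\<in>UNIV. f x w * g w z * h z y)"
    by (rule sum.swap)
  also have "\<dots> = mm f (mm g h) x y"
    by (simp add: mm_def sum_distrib_left mult.assoc)
  finally show "mm (mm f g) h x y = mm f (mm g h) x y" .
qed

lemma mm_add_left: "mm (f + g) h = mm f h + mm g h"
  unfolding mm_def by (simp add: fun_eq_iff distrib_right sum.distrib)

lemma mm_add_right: "mm h (f + g) = mm h f + mm h g"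
  unfolding mm_def by (simp add: fun_eq_iff distrib_left sum.distrib)

lemma mm_zero_left[simp]: "mm 0 f = 0" and mm_zero_right[simp]: "mm f 0 = 0"
  unfolding mm_def by (auto simp: fun_eq_iff)

lemma fun_add_self[simp]: "(f::'a \<Rightarrow> 'b \<Rightarrow> bit) + f = 0"
  by (auto simp: fun_eq_iff)

lemma fun_minus_eq: "(f::'a \<Rightarrow> 'b \<Rightarrow> bit) - g = f + g"
  by (auto simp: fun_eq_iff)

lemma IA_add: "f \<in> IA \<Longrightarrow> g \<in> IA \<Longrightarrow> f + g \<in> IA"
  by (auto simp: IA_iff)
lemma IA_zero[simp]: "0 \<in> IA"
  by (auto simp: IA_iff)

definition E :: "'a \<Rightarrow> 'a \<Rightarrow> 'a \<Rightarrow> 'a \<Rightarrow> bit" where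
  "E u v = (\<lambda>x y. if x = u \<and> y = v then 1 else 0)"

lemma E_IA: "u \<le> v \<Longrightarrow> E u v \<in> IA"
  by (auto simp: IA_iff E_def)

lemma mm_E_left: "mm (E a b) g = (\<lambda>x y. if x = a then g b y else 0)"
proof (intro ext)
  fix x y
  have "mm (E a b) g x y = (\<Sum>z\<in>UNIV. E a b x z * g z y)" by (simp add: mm_def)
  also have "\<dots> = (\<Sum>z\<in>UNIV. if z = b then (if x = a then g b y else 0) else 0)"
    by (rule sum.cong) (auto simp: E_def)
  also have "\<dots> = (if x = a then g b y else 0)" by simp
  finally show "mm (E a b) g x y = (if x = a then g b y else 0)" .
qed

lemma mm_E_right: "mm f (E a b) = (\<lambda>x y. if y = b then f x a else 0)"
proof (intro ext)
  fix x y
  have "mm f (E a b) x y = (\<Sum>z\<in>UNIV. f x z * E a b z y)" by (simp add: mm_def)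
  also have "\<dots> = (\<Sum>z\<in>UNIV. if z = a then (if y = b then f x a else 0) else 0)"
    by (rule sum.cong) (auto simp: E_def)
  also have "\<dots> = (if y = b then f x a else 0)" by simp
  finally show "mm f (E a b) x y = (if y = b then f x a else 0)" .
qed

lemma mm_E: "mm (E a b) (E c d) = (if b = c then E a d else 0)"
  unfolding mm_E_left by (auto simp: E_def fun_eq_iff)

definition dl :: "'a \<Rightarrow> 'a \<Rightarrow> bit" where "dl = (\<lambda>x y. if x = y then 1 else 0)"

lemma dl_IA[simp]: "(dl::'a::order\<Rightarrow>_) \<in> IA" by (auto simp: IA_iff dl_def)

lemma mm_dl_left[simp]: "mm dl f = f"
proof (intro ext)
  fix x y
  have "mm dl f x y = (\<Sum>z\<in>UNIV. dl x z * f z y)" by (simp add: mm_def)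
  also have "\<dots> = (\<Sum>z\<in>UNIV. if z = x then f x y else 0)"
    by (rule sum.cong) (auto simp: dl_def)
  finally show "mm dl f x y = f x y" by simp
qed

lemma mm_dl_right[simp]: "mm f dl = f"
proof (intro ext)
  fix x y
  have "mm f dl x y = (\<Sum>z\<in>UNIV. f x z * dl z y)" by (simp add: mm_def)
  also have "\<dots> = (\<Sum>z\<in>UNIV. if z = y then f x y else 0)"
    by (rule sum.cong) (auto simp: dl_def)
  finally show "mm f dl x y = f x y" by simp
qed


lemma bit_add_self2[simp]: "(x::bit) + (x + y) = y"
  by (simp add: add.assoc[symmetric])
lemma fun_add_self2[simp]: "(f::'a \<Rightarrow> 'b \<Rightarrow> bit) + (f + g) = g"
  by (simp add: add.assoc[symmetric])
lemma fun_add_eq0: "(a::'a \<Rightarrow> 'b \<Rightarrow> bit) + b = 0 \<longleftrightarrow> a = b"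
proof
  assume "a + b = 0"
  then have "a + (a + b) = a" by simp
  then show "a = b" by simp
qed simp

lemma zero_eq: "(\<lambda>a b. 0) = (0::'a \<Rightarrow> 'b \<Rightarrow> bit)"
  by (simp add: fun_eq_iff)
lemma plus_eta: "(\<lambda>x y. (f::'a \<Rightarrow> 'b \<Rightarrow> bit) x y + g x y) = f + g"
  by (simp add: fun_eq_iff)

definition cm where "cm a b = mm a b + mm b a"

lemma cm_IA: "a \<in> IA \<Longrightarrow> b \<in> IA \<Longrightarrow> cm a b \<in> IA"
  by (simp add: cm_def IA_add mm_IA)
lemma cm_add_left: "cm (a + b) c = cm a c + cm b c"
  by (simp add: cm_def mm_add_left mm_add_right add_ac)
lemma cm_add_right: "cm c (a + b) = cm c a + cm c b"
  by (simp add: cm_def mm_add_left mm_add_right add_ac)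
lemma cm_zero[simp]: "cm 0 a = 0" "cm a 0 = 0"
  by (simp_all add: cm_def)
lemma cm_self[simp]: "cm a a = 0"
  by (simp add: cm_def)
lemma cm_sym: "cm a b = cm b a"
  by (simp add: cm_def add.commute)
lemma cm_sq: "cm (mm n n) y = cm n (cm n y)"
  by (simp add: cm_def mm_add_left mm_add_right mm_assoc add_ac)
lemma cm_sq_self: "cm n (mm n n) = 0"
  by (simp add: cm_def mm_assoc)
lemma mm_sq_add: "mm (a + b) (a + b) = mm a a + mm b b + cm a b"
  by (simp add: cm_def mm_add_left mm_add_right add_ac)

definition central :: "('a::{order,finite} \<Rightarrow> 'a \<Rightarrow> bit) \<Rightarrow> bool" where
  "central c \<longleftrightarrow> c \<in> IA \<and> (\<forall>f\<in>IA. mm c f = mm f c)"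

lemma central_cm: "central c \<Longrightarrow> y \<in> IA \<Longrightarrow> cm c y = 0"
  by (simp add: central_def cm_def)
lemma central_cm': "central c \<Longrightarrow> y \<in> IA \<Longrightarrow> cm y c = 0"
  by (simp add: central_def cm_def)
lemma central_zero[simp]: "central 0"
  by (simp add: central_def)
lemma central_add: "central a \<Longrightarrow> central b \<Longrightarrow> central (a + b)"
  by (simp add: central_def IA_add mm_add_left mm_add_right)

definition idem :: "('a::{order,finite} \<Rightarrow> 'a \<Rightarrow> bit) \<Rightarrow> bool" where
  "idem e \<longleftrightarrow> e \<in> IA \<and> mm e e = e"

lemma IA_induct[consumes 1, case_names zero basis add]:
  fixes f :: "'a::{order,finite} \<Rightarrow> 'a \<Rightarrow> bit"
  assumes "f \<in> IA" "P 0" "\<And>u v. u \<le> v \<Longrightarrow> P (E u v)"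
    "\<And>a b. a \<in> IA \<Longrightarrow> b \<in> IA \<Longrightarrow> P a \<Longrightarrow> P b \<Longrightarrow> P (a + b)"
  shows "P f"
proof -
  have "\<forall>f. f \<in> IA \<longrightarrow> card {p. f (fst p) (snd p) \<noteq> 0} = n \<longrightarrow> P f" for n
  proof (induction n rule: less_induct)
    case (less n)
    show ?case
    proof (intro allI impI)
      fix f :: "'a \<Rightarrow> 'a \<Rightarrow> bit"
      assume f: "f \<in> IA" and c: "card {p. f (fst p) (snd p) \<noteq> 0} = n"
      show "P f"
      proof (cases "f = 0")
        case True
        then show ?thesis using assms(2) by simp
      next
        case False
        then obtain u v where uv: "f u v \<noteq> 0" by (auto simp: fun_eq_iff)
        then have le: "u \<le> v" using f unfolding IA_iff by blast
        define g where "g = f + E u v"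
        have g: "g \<in> IA" using f E_IA[OF le] IA_add g_def by blast
        have gu: "g u v = 0" using uv by (simp add: g_def E_def)
        have gs: "g x y \<noteq> 0 \<Longrightarrow> f x y \<noteq> 0" for x y
          using gu by (cases "x = u \<and> y = v") (auto simp: g_def E_def)
        have sub1: "{p. g (fst p) (snd p) \<noteq> 0} \<subseteq> {p. f (fst p) (snd p) \<noteq> 0}"
          using gs by auto
        have "(u, v) \<in> {p. f (fst p) (snd p) \<noteq> 0}" "(u, v) \<notin> {p. g (fst p) (snd p) \<noteq> 0}"
          using uv gu by auto
        then have sub: "{p. g (fst p) (snd p) \<noteq> 0} \<subset> {p. f (fst p) (snd p) \<noteq> 0}"
          using sub1 by blast
        have "card {p. g (fst p) (snd p) \<noteq> 0} < n"
          using psubset_card_mono[OF _ sub] c by simp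
        then have "P g" using less.IH g by blast
        moreover have "f = g + E u v" by (simp add: g_def add.assoc)
        ultimately show "P f" using assms(4)[OF g E_IA[OF le]] assms(3)[OF le] by simp
      qed
    qed
  qed
  then show ?thesis using assms(1) by blast
qed

locale IP =
  fixes \<phi> :: "('a::{order,finite} \<Rightarrow> 'a \<Rightarrow> bit) \<Rightarrow> ('a \<Rightarrow> 'a \<Rightarrow> bit)"
  assumes phi_add: "ia_additive \<phi>" and phi_bij: "ia_bijective \<phi>"
    and phi_pres: "\<phi> ` ia_idempotents \<subseteq> ia_idempotents"
begin

lemma phi_IA: "f \<in> IA \<Longrightarrow> \<phi> f \<in> IA"
  using phi_add unfolding ia_additive_def by blast
lemma phi_plus: "f \<in> IA \<Longrightarrow> g \<in> IA \<Longrightarrow> \<phi> (f + g) = \<phi> f + \<phi> g"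
  using phi_add unfolding ia_additive_def by blast
lemma phi_zero[simp]: "\<phi> 0 = 0"
  using phi_plus[of 0 0] by simp
lemma phi_idem: "idem e \<Longrightarrow> idem (\<phi> e)"
proof -
  assume e: "idem e"
  then have "e \<in> ia_idempotents" by (simp add: idem_def ia_idempotents_def ia_mult_mm)
  then have "\<phi> e \<in> ia_idempotents" using phi_pres by blast
  then have 1: "\<phi> e \<in> IA" and "ia_mult (\<phi> e) (\<phi> e) = \<phi> e" by (auto simp: ia_idempotents_def)
  then show "idem (\<phi> e)" using ia_mult_mm[OF 1 1] by (simp add: idem_def)
qed
lemma phi_surj: "y \<in> IA \<Longrightarrow> \<exists>b\<in>IA. y = \<phi> b"
  using phi_bij unfolding ia_bijective_def bij_betw_def by blast
lemma phi_inj: "a \<in> IA \<Longrightarrow> b \<in> IA \<Longrightarrow> \<phi> a = \<phi> b \<Longrightarrow> a = b"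
  using phi_bij unfolding ia_bijective_def bij_betw_def inj_on_def by blast

definition Q where "Q a = \<phi> (mm a a) + mm (\<phi> a) (\<phi> a)"
definition Bf where "Bf a b = \<phi> (cm a b) + cm (\<phi> a) (\<phi> b)"

lemma Q_add: "a \<in> IA \<Longrightarrow> b \<in> IA \<Longrightarrow> Q (a + b) = Q a + Q b + Bf a b"
  by (simp add: Q_def Bf_def mm_sq_add phi_plus IA_add mm_IA cm_IA add_ac)

lemma Q_idem: "idem e \<Longrightarrow> Q e = 0"
  using phi_idem[of e] by (simp add: Q_def idem_def)

lemma Bf_idem: "idem a \<Longrightarrow> idem b \<Longrightarrow> idem (a + b) \<Longrightarrow> Bf a b = 0"
  using Q_add[of a b] Q_idem[of a] Q_idem[of b] Q_idem[of "a + b"] by (simp add: idem_def)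

lemma Bf_sym: "Bf a b = Bf b a"
  by (simp add: Bf_def cm_sym)
lemma Bf_self[simp]: "Bf a a = 0"
  by (simp add: Bf_def)
lemma Bf_zero[simp]: "Bf 0 a = 0" "Bf a 0 = 0"
  by (simp_all add: Bf_def)
lemma Bf_add_left: "a \<in> IA \<Longrightarrow> b \<in> IA \<Longrightarrow> c \<in> IA \<Longrightarrow> Bf (a + b) c = Bf a c + Bf b c"
  by (simp add: Bf_def cm_add_left phi_plus cm_IA phi_IA add_ac)
lemma Bf_add_right: "a \<in> IA \<Longrightarrow> b \<in> IA \<Longrightarrow> c \<in> IA \<Longrightarrow> Bf c (a + b) = Bf c a + Bf c b"
  using Bf_add_left[of a b c] by (simp add: Bf_sym)

lemma cm_phi: "cm (\<phi> a) (\<phi> c) = Bf a c + \<phi> (cm a c)"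
  by (simp add: Bf_def add_ac)


lemma Q_E_diag: "Q (E x x) = 0"
  by (rule Q_idem) (simp add: idem_def E_IA mm_E)

lemma B_diag: "x \<noteq> y \<Longrightarrow> Bf (E x x) (E y y) = 0"
  by (rule Bf_idem) (auto simp: idem_def E_IA mm_E IA_add mm_add_left mm_add_right)

lemma idem_Euu_Euv: "u < v \<Longrightarrow> idem (E u u + E u v)"
  by (auto simp: idem_def E_IA mm_E IA_add mm_add_left mm_add_right)
lemma idem_Evv_Euv: "u < v \<Longrightarrow> idem (E v v + E u v)"
  by (auto simp: idem_def E_IA mm_E IA_add mm_add_left mm_add_right)

lemma B1: assumes "u < v" "x \<noteq> u" "x \<noteq> v" shows "Bf (E u v) (E x x) = 0"
proof -
  have ia: "E u u \<in> IA" "E u v \<in> IA" "E x x \<in> IA" using assms by (auto intro: E_IA)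
  have "Bf (E x x) (E u u + E u v) = 0"
    using assms by (intro Bf_idem) (auto simp: idem_def E_IA mm_E IA_add mm_add_left mm_add_right)
  moreover have "Bf (E x x) (E u u) = 0" using assms B_diag by blast
  ultimately have "Bf (E x x) (E u v) = 0" using Bf_add_right[OF ia(1,2,3)] by simp
  then show ?thesis by (simp add: Bf_sym)
qed

lemma B2: assumes "u < v" shows "Bf (E u v) (E u u) = Q (E u v)"
proof -
  have ia: "E u u \<in> IA" "E u v \<in> IA" using assms by (auto intro: E_IA)
  have "Q (E u u + E u v) = 0" using Q_idem idem_Euu_Euv assms by blast
  then have "Q (E u v) + Bf (E u u) (E u v) = 0" using Q_add[OF ia] Q_E_diag by simp
  then show ?thesis by (simp add: fun_add_eq0 Bf_sym)
qed

lemma B3: assumes "u < v" shows "Bf (E u v) (E v v) = Q (E u v)"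
proof -
  have ia: "E v v \<in> IA" "E u v \<in> IA" using assms by (auto intro: E_IA)
  have "Q (E v v + E u v) = 0" using Q_idem idem_Evv_Euv assms by blast
  then have "Q (E u v) + Bf (E v v) (E u v) = 0" using Q_add[OF ia] Q_E_diag by simp
  then show ?thesis by (simp add: fun_add_eq0 Bf_sym)
qed

lemma B6: assumes "u < v" "u < y" "y \<noteq> v" shows "Bf (E u v) (E u y) = 0"
proof -
  have ia: "E u u \<in> IA" "E u v \<in> IA" "E u y \<in> IA" using assms by (auto intro: E_IA)
  have "idem (E u u + E u v + E u y)"
    using assms by (auto simp: idem_def E_IA mm_E IA_add mm_add_left mm_add_right add_ac)
  then have "Q (E u u + E u v + E u y) = 0" by (rule Q_idem)
  moreover have "Q (E u u + E u v) = 0" using Q_idem idem_Euu_Euv assms by blast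
  moreover have "Bf (E u u) (E u y) = Q (E u y)" using B2[OF assms(2)] by (simp add: Bf_sym)
  ultimately show ?thesis
    using Q_add[OF IA_add[OF ia(1,2)] ia(3)] Bf_add_left[OF ia(1,2,3)] by simp
qed

lemma B7: assumes "u < v" "x < v" "x \<noteq> u" shows "Bf (E u v) (E x v) = 0"
proof -
  have ia: "E v v \<in> IA" "E u v \<in> IA" "E x v \<in> IA" using assms by (auto intro: E_IA)
  have "idem (E v v + E u v + E x v)"
    using assms by (auto simp: idem_def E_IA mm_E IA_add mm_add_left mm_add_right add_ac)
  then have "Q (E v v + E u v + E x v) = 0" by (rule Q_idem)
  moreover have "Q (E v v + E u v) = 0" using Q_idem idem_Evv_Euv assms by blast
  moreover have "Bf (E v v) (E x v) = Q (E x v)" using B3[OF assms(2)] by (simp add: Bf_sym)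
  ultimately show ?thesis
    using Q_add[OF IA_add[OF ia(1,2)] ia(3)] Bf_add_left[OF ia(1,2,3)] by simp
qed

lemma B8: assumes "u < v" "x < y" "x \<noteq> u" "x \<noteq> v" "y \<noteq> u" "y \<noteq> v"
  shows "Bf (E u v) (E x y) = 0"
proof -
  have ia: "E u u \<in> IA" "E u v \<in> IA" "E x x \<in> IA" "E x y \<in> IA" using assms by (auto intro: E_IA)
  have "Bf (E u u + E u v) (E x x + E x y) = 0"
    using assms by (intro Bf_idem) (auto simp: idem_def E_IA mm_E IA_add mm_add_left mm_add_right add_ac)
  moreover have "Bf (E u u) (E x x) = 0" using B_diag assms by metis
  moreover have "Bf (E u u) (E x y) = 0" using B1[of x y u] assms by (simp add: Bf_sym)
  moreover have "Bf (E u v) (E x x) = 0" using B1[of u v x] assms by simp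
  ultimately show ?thesis
    using Bf_add_left[OF ia(1,2) IA_add[OF ia(3,4)]] Bf_add_right[OF ia(3,4) ia(1)]
      Bf_add_right[OF ia(3,4) ia(2)] by simp
qed

lemma B5: assumes "u < v" "v < y" shows "Bf (E u v) (E v y) = Q (E u y)"
proof -
  have uy: "u < y" using assms by simp
  have ia: "E u u \<in> IA" "E u v \<in> IA" "E u y \<in> IA" "E y y \<in> IA" "E v y \<in> IA"
    using assms by (auto intro: E_IA)
  define A where "A = E u u + E u v + E u y"
  have iaA: "A \<in> IA" using ia by (simp add: A_def IA_add)
  have "idem A"
    using assms by (auto simp: A_def idem_def E_IA mm_E IA_add mm_add_left mm_add_right add_ac)
  then have QA: "Q A = 0" by (rule Q_idem)
  have "idem (A + E y y + E v y)"
    using assms by (auto simp: A_def idem_def E_IA mm_E IA_add mm_add_left mm_add_right add_ac)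
  then have QP: "Q (A + E y y + E v y) = 0" by (rule Q_idem)
  have BA: "Bf A (E y y) = Q (E u y)"
  proof -
    have "Bf A (E y y) = Bf (E u u) (E y y) + Bf (E u v) (E y y) + Bf (E u y) (E y y)"
      unfolding A_def using ia by (simp add: Bf_add_left IA_add)
    also have "\<dots> = Q (E u y)" using assms B_diag[of u y] B1[of u v y] B3[OF uy] by simp
    finally show ?thesis .
  qed
  have BAy: "Bf (A + E y y) (E v y) = Bf (E u v) (E v y) + Q (E v y)"
  proof -
    have "Bf (A + E y y) (E v y) = Bf (E u u) (E v y) + Bf (E u v) (E v y) + Bf (E u y) (E v y)
        + Bf (E y y) (E v y)"
      unfolding A_def using ia by (simp add: Bf_add_left IA_add)
    also have "\<dots> = Bf (E u v) (E v y) + Q (E v y)"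
      using assms B1[of v y u] B7[OF uy, of v] B3[OF assms(2)] by (simp add: Bf_sym)
    finally show ?thesis .
  qed
  have QAy: "Q (A + E y y) = Q (E u y)" using Q_add[OF iaA ia(4)] QA Q_E_diag BA by simp
  have "Q (A + E y y + E v y) = Q (A + E y y) + Q (E v y) + Bf (A + E y y) (E v y)"
    by (rule Q_add[OF IA_add[OF iaA ia(4)] ia(5)])
  also have "\<dots> = Q (E u y) + Q (E v y) + (Bf (E u v) (E v y) + Q (E v y))"
    using QAy BAy by simp
  finally have "Q (E u y) + Bf (E u v) (E v y) = 0" using QP by (simp add: add_ac)
  then show ?thesis by (simp add: fun_add_eq0)
qed

lemma B4: assumes "x < u" "u < v" shows "Bf (E u v) (E x u) = Q (E x v)"
  using B5[OF assms] by (simp add: Bf_sym)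


lemma K_aux: "\<forall>u v. card {p::'a\<times>'a. fst p \<le> u \<and> v \<le> snd p} = m \<longrightarrow> u < v \<longrightarrow> central (Q (E u v))"
proof (induction m rule: less_induct)
  case (less m)
  show ?case
  proof (intro allI impI)
    fix u v :: 'a
    assume c: "card {p::'a\<times>'a. fst p \<le> u \<and> v \<le> snd p} = m" and uv: "u < v"
    have neq: "u \<noteq> v" "v \<noteq> u" using uv by auto
    have IH1: "central (Q (E x v))" if "x < u" for x
    proof -
      have "{p::'a\<times>'a. fst p \<le> x \<and> v \<le> snd p} \<subset> {p::'a\<times>'a. fst p \<le> u \<and> v \<le> snd p}"
      proof
        show "{p::'a\<times>'a. fst p \<le> x \<and> v \<le> snd p} \<subseteq> {p::'a\<times>'a. fst p \<le> u \<and> v \<le> snd p}"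
          using that by (auto dest: order_trans less_imp_le)
        have "(u, v) \<notin> {p::'a\<times>'a. fst p \<le> x \<and> v \<le> snd p}" using that by auto
        moreover have "(u, v) \<in> {p::'a\<times>'a. fst p \<le> u \<and> v \<le> snd p}" by simp
        ultimately show "{p::'a\<times>'a. fst p \<le> x \<and> v \<le> snd p} \<noteq> {p::'a\<times>'a. fst p \<le> u \<and> v \<le> snd p}"
          by blast
      qed
      then have "card {p::'a\<times>'a. fst p \<le> x \<and> v \<le> snd p} < m"
        using psubset_card_mono[OF finite] c by blast
      moreover have "x < v" using that uv by (rule less_trans)
      ultimately show ?thesis using less.IH by blast
    qed
    have IH2: "central (Q (E u y))" if "v < y" for y
    proof -
      have "{p::'a\<times>'a. fst p \<le> u \<and> y \<le> snd p} \<subset> {p::'a\<times>'a. fst p \<le> u \<and> v \<le> snd p}"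
      proof
        show "{p::'a\<times>'a. fst p \<le> u \<and> y \<le> snd p} \<subseteq> {p::'a\<times>'a. fst p \<le> u \<and> v \<le> snd p}"
          using that by (auto dest: order_trans less_imp_le)
        have "(u, v) \<notin> {p::'a\<times>'a. fst p \<le> u \<and> y \<le> snd p}" using that by auto
        moreover have "(u, v) \<in> {p::'a\<times>'a. fst p \<le> u \<and> v \<le> snd p}" by simp
        ultimately show "{p::'a\<times>'a. fst p \<le> u \<and> y \<le> snd p} \<noteq> {p::'a\<times>'a. fst p \<le> u \<and> v \<le> snd p}"
          by blast
      qed
      then have "card {p::'a\<times>'a. fst p \<le> u \<and> y \<le> snd p} < m"
        using psubset_card_mono[OF finite] c by blast
      moreover have "u < y" using that uv by (meson less_trans)
      ultimately show ?thesis using less.IH by blast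
    qed
    define e where "e = E u v"
    define N where "N = \<phi> e"
    have eIA: "e \<in> IA" using uv by (simp add: e_def E_IA)
    have NIA: "N \<in> IA" using eIA by (simp add: N_def phi_IA)
    have ee: "mm e e = 0" using neq by (simp add: e_def mm_E)
    have QN: "Q e = mm N N" by (simp add: Q_def ee N_def)
    have Nc: "cm N c = 0" if "central c" for c using central_cm'[OF that NIA] .
    have key: "cm (mm N N) (\<phi> b) = cm N (Bf e b) + Bf e (cm e b)" for b
    proof -
      have z: "cm e (cm e b) = 0" using cm_sq[of e b] ee by simp
      show ?thesis by (simp add: cm_sq cm_phi cm_add_right N_def z)
    qed
    have all: "cm (mm N N) (\<phi> b) = 0" if "b \<in> IA" for b
    proof (rule IA_induct[where P = "\<lambda>b. cm (mm N N) (\<phi> b) = 0", OF that])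
      show "cm (mm N N) (\<phi> 0) = 0" by simp
    next
      fix a b :: "'a \<Rightarrow> 'a \<Rightarrow> bit"
      assume "a \<in> IA" "b \<in> IA" "cm (mm N N) (\<phi> a) = 0" "cm (mm N N) (\<phi> b) = 0"
      then show "cm (mm N N) (\<phi> (a + b)) = 0" by (simp add: phi_plus cm_add_right)
    next
      fix x y :: 'a
      assume basis: "x \<le> y"
      have xy: "x = y \<or> x < y" using basis by (auto simp: order.order_iff_strict)
      show "cm (mm N N) (\<phi> (E x y)) = 0"
      proof (cases "x = y")
        case True
        show ?thesis
        proof (cases "x = u")
          case True
          have "cm e (E x y) = e" using \<open>x = y\<close> True neq by (simp add: e_def cm_def mm_E)
          moreover have "Bf e (E x y) = Q e" using \<open>x = y\<close> True B2[OF uv] by (simp add: e_def)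
          ultimately show ?thesis by (simp add: key QN cm_sq_self)
        next
          case xu: False
          show ?thesis
          proof (cases "x = v")
            case True
            have "cm e (E x y) = e" using \<open>x = y\<close> True neq by (simp add: e_def cm_def mm_E)
            moreover have "Bf e (E x y) = Q e" using \<open>x = y\<close> True B3[OF uv] by (simp add: e_def)
            ultimately show ?thesis by (simp add: key QN cm_sq_self)
          next
            case False
            have "cm e (E x y) = 0" using \<open>x = y\<close> xu False by (simp add: e_def cm_def mm_E)
            moreover have "Bf e (E x y) = 0" using \<open>x = y\<close> xu False B1[OF uv] by (simp add: e_def)
            ultimately show ?thesis by (simp add: key)
          qed
        qed
      next
        case False
        then have xly: "x < y" using xy by simp
        show ?thesis
        proof (cases "x = u \<and> y = v")
          case True
          then show ?thesis by (simp add: key e_def)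
        next
          case nuv: False
          show ?thesis
          proof (cases "y = u")
            case True
            have "cm e (E x y) = E x v" using True xly uv by (auto simp: e_def cm_def mm_E)
            moreover have "Bf e (E x y) = Q (E x v)" using True xly B4[OF _ uv] by (simp add: e_def)
            moreover have "Bf e (E x v) = 0" using True xly uv B7[OF uv, of x] by (simp add: e_def)
            ultimately show ?thesis using IH1[of x] True xly by (simp add: key Nc)
          next
            case yu: False
            show ?thesis
            proof (cases "x = v")
              case True
              have "cm e (E x y) = E u y" using True xly uv by (auto simp: e_def cm_def mm_E)
              moreover have "Bf e (E x y) = Q (E u y)" using True xly B5[OF uv] by (simp add: e_def)
              moreover have "Bf e (E u y) = 0" using True xly uv B6[OF uv, of y] by (simp add: e_def)
              ultimately show ?thesis using IH2[of y] True xly by (simp add: key Nc)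
            next
              case xv: False
              have "cm e (E x y) = 0" using yu xv by (simp add: e_def cm_def mm_E)
              moreover have "Bf e (E x y) = 0"
              proof (cases "x = u")
                case True
                then show ?thesis using nuv xly B6[OF uv, of y] by (simp add: e_def)
              next
                case xu: False
                show ?thesis
                proof (cases "y = v")
                  case True
                  then show ?thesis using xu xly B7[OF uv, of x] by (simp add: e_def)
                next
                  case False
                  then show ?thesis using xu xv yu xly B8[OF uv xly] by (simp add: e_def)
                qed
              qed
              ultimately show ?thesis by (simp add: key)
            qed
          qed
        qed
      qed
    qed
    have "central (mm N N)"
      unfolding central_def
    proof (intro conjI ballI)
      show "mm N N \<in> IA" using NIA by (simp add: mm_IA)
      fix f :: "'a \<Rightarrow> 'a \<Rightarrow> bit" assume "f \<in> IA"
      then obtain b where b: "b \<in> IA" "f = \<phi> b" using phi_surj by blast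
      have "cm (mm N N) f = 0" using all[OF b(1)] b(2) by simp
      then show "mm (mm N N) f = mm f (mm N N)" by (simp add: cm_def fun_add_eq0)
    qed
    then show "central (Q (E u v))" using QN by (simp add: e_def)
  qed
qed

lemma K: "u < v \<Longrightarrow> central (Q (E u v))"
  using K_aux by blast

lemma Bb1: assumes "u < v" "w \<le> z" shows "central (Bf (E u v) (E w z))"
proof (cases "w = z")
  case True
  then show ?thesis using B1[OF assms(1), of w] B2[OF assms(1)] B3[OF assms(1)] K[OF assms(1)]
    by (cases "w = u"; cases "w = v") auto
next
  case False
  then have wz: "w < z" using assms by simp
  show ?thesis
  proof (cases "w = u \<and> z = v")
    case True then show ?thesis by simp
  next
    case nuv: False
    show ?thesis
    proof (cases "z = u")
      case True then show ?thesis using B4[OF _ assms(1), of w] K[of w v] wz assms by auto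
    next
      case zu: False
      show ?thesis
      proof (cases "w = v")
        case True then show ?thesis using B5[OF assms(1), of z] K[of u z] wz assms by auto
      next
        case wv: False
        show ?thesis
        proof (cases "w = u")
          case True then show ?thesis using B6[OF assms(1), of z] nuv wz by auto
        next
          case wu: False
          show ?thesis
          proof (cases "z = v")
            case True then show ?thesis using B7[OF assms(1), of w] wu wz by auto
          next
            case False then show ?thesis using B8[OF assms(1) wz] wu wv zu by auto
          qed
        qed
      qed
    qed
  qed
qed

lemma Bb: assumes "x \<le> y" "w \<le> z" shows "central (Bf (E x y) (E w z))"
proof (cases "x = y")
  case xy: True
  show ?thesis
  proof (cases "w = z")
    case True
    then show ?thesis using xy B_diag[of x w] by (cases "x = w") auto
  next
    case False
    then have "w < z" using assms by simp
    then show ?thesis using Bb1[of w z x y] assms by (simp add: Bf_sym)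
  qed
next
  case False
  then have "x < y" using assms by simp
  then show ?thesis using Bb1 assms by simp
qed

lemma Bc1: assumes "a \<in> IA" "w \<le> z" shows "central (Bf a (E w z))"
proof (rule IA_induct[where P = "\<lambda>a. central (Bf a (E w z))", OF assms(1)])
  show "central (Bf 0 (E w z))" by simp
next
  fix a c :: "'a \<Rightarrow> 'a \<Rightarrow> bit"
  assume "a \<in> IA" "c \<in> IA" "central (Bf a (E w z))" "central (Bf c (E w z))"
  then show "central (Bf (a + c) (E w z))"
    using E_IA[OF assms(2)] by (simp add: Bf_add_left central_add)
next
  fix x y :: 'a assume "x \<le> y"
  then show "central (Bf (E x y) (E w z))" using Bb assms(2) by blast
qed

lemma Bc: assumes "a \<in> IA" "b \<in> IA" shows "central (Bf a b)"
proof (rule IA_induct[where P = "\<lambda>b. central (Bf a b)", OF assms(2)])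
  show "central (Bf a 0)" by simp
next
  fix b c :: "'a \<Rightarrow> 'a \<Rightarrow> bit"
  assume "b \<in> IA" "c \<in> IA" "central (Bf a b)" "central (Bf a c)"
  then show "central (Bf a (b + c))"
    using assms(1) by (simp add: Bf_add_right central_add)
next
  fix w z :: 'a assume "w \<le> z"
  then show "central (Bf a (E w z))" using Bc1 assms(1) by blast
qed

lemma Qc: assumes "a \<in> IA" shows "central (Q a)"
proof (rule IA_induct[where P = "\<lambda>a. central (Q a)", OF assms])
  show "central (Q 0)" by (simp add: Q_def)
next
  fix a b :: "'a \<Rightarrow> 'a \<Rightarrow> bit"
  assume "a \<in> IA" "b \<in> IA" "central (Q a)" "central (Q b)"
  then show "central (Q (a + b))" using Bc[of a b] by (simp add: Q_add central_add)
next
  fix u v :: 'a assume uv: "u \<le> v"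
  show "central (Q (E u v))"
  proof (cases "u = v")
    case True then show ?thesis using Q_E_diag[of u] by simp
  next
    case False then show ?thesis using K[of u v] uv by simp
  qed
qed

end

instance bit :: finite
proof
  have u: "UNIV = {0::bit, 1}" by auto
  show "finite (UNIV :: bit set)" unfolding u by simp
qed

lemma finite_IA: "finite (IA :: ('a::{order,finite} \<Rightarrow> 'a \<Rightarrow> bit) set)"
  by simp

lemma swap_eq: "(p::'a \<Rightarrow> 'b \<Rightarrow> bit) + q = r \<Longrightarrow> p = q + r"
proof -
  assume h: "p + q = r"
  have "p = p + q + q" by (simp add: add.assoc)
  also have "\<dots> = r + q" by (simp add: h)
  finally show "p = q + r" by (simp add: add.commute)
qed

definition sc :: "bit \<Rightarrow> 'a \<Rightarrow> 'a \<Rightarrow> bit" where "sc k = (\<lambda>x y. if x = y then k else 0)"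

lemma sc_cases: "sc k = (if k = 0 then 0 else dl)"
  by (cases k) (auto simp: sc_def dl_def fun_eq_iff)

lemma sc_IA: "(sc k :: 'a::{order,finite} \<Rightarrow> _) \<in> IA"
  by (simp add: sc_cases)

lemma sc_central: "central (sc k :: 'a::{order,finite} \<Rightarrow> _)"
  by (simp add: sc_cases central_def)

lemma sc_add: "sc (a + b) = sc a + sc b"
  by (auto simp: sc_def fun_eq_iff)

lemma sc_zero[simp]: "sc 0 = 0" by (simp add: sc_cases)

lemma mm_sc_sc: "mm (sc k) (sc k) = (sc k :: 'a::{order,finite} \<Rightarrow> _)"
  by (simp add: sc_cases)

lemma center_iff: "c \<in> ia_center \<longleftrightarrow> central c"
  by (auto simp: ia_center_def central_def ia_mult_mm)

lemma idem_iff: "e \<in> ia_idempotents \<longleftrightarrow> e \<in> IA \<and> mm e e = e"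
  by (auto simp: ia_idempotents_def ia_mult_mm)

lemma mm_diag:
  fixes f g :: "'a::{order,finite} \<Rightarrow> 'a \<Rightarrow> bit"
  assumes "f \<in> IA" "g \<in> IA" shows "mm f g z z = f z z * g z z"
proof -
  have "mm f g z z = (\<Sum>w\<in>UNIV. f z w * g w z)" by (simp add: mm_def)
  also have "\<dots> = (\<Sum>w\<in>UNIV. if w = z then f z z * g z z else 0)"
  proof (rule sum.cong)
    fix w assume "w \<in> (UNIV::'a set)"
    show "f z w * g w z = (if w = z then f z z * g z z else 0)"
    proof (cases "w = z")
      case False
      then have "\<not> z \<le> w \<or> \<not> w \<le> z" by auto
      then show ?thesis
      proof
        assume "\<not> z \<le> w"
        then have "f z w = 0" using assms(1) by (simp add: IA_iff)
        then show ?thesis using False by simp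
      next
        assume "\<not> w \<le> z"
        then have "g w z = 0" using assms(2) by (simp add: IA_iff)
        then show ?thesis using False by simp
      qed
    qed simp
  qed simp
  also have "\<dots> = f z z * g z z" by simp
  finally show ?thesis .
qed

lemma central_diag:
  fixes c :: "'a::{order,finite} \<Rightarrow> 'a \<Rightarrow> bit"
  assumes "central c" "poset_connected TYPE('a)"
  shows "c = sc (c z z)"
proof -
  have cIA: "c \<in> IA" and comm: "\<And>f. f \<in> IA \<Longrightarrow> mm c f = mm f c"
    using assms(1) by (auto simp: central_def)
  have off: "c x y = 0" if "x \<noteq> y" for x y
  proof (cases "x \<le> y")
    case True
    have "mm c (E x x) x y = mm (E x x) c x y" using comm[of "E x x"] by (simp add: E_IA)
    then show ?thesis using that by (simp add: mm_E_left mm_E_right)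
  next
    case False then show ?thesis using cIA by (simp add: IA_iff)
  qed
  have eq: "c x x = c y y" if "x \<le> y" for x y
  proof -
    have "mm c (E x y) x y = mm (E x y) c x y" using comm[of "E x y"] that by (simp add: E_IA)
    then show ?thesis by (simp add: mm_E_left mm_E_right)
  qed
  have path: "(\<lambda>a b. a \<le> b \<or> b \<le> a)\<^sup>*\<^sup>* z x \<Longrightarrow> c z z = c x x" for x
  proof (induction rule: rtranclp_induct)
    case base then show ?case by simp
  next
    case (step y w)
    show ?case
    proof (cases "y \<le> w")
      case True
      show ?thesis using step.IH eq[OF True] by (rule trans)
    next
      case False
      then have "w \<le> y" using step.hyps(2) by blast
      show ?thesis using step.IH sym[OF eq[OF \<open>w \<le> y\<close>]] by (rule trans)
    qed
  qed
  have dg: "c x x = c z z" for x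
  proof -
    have "(\<lambda>a b. a \<le> b \<or> b \<le> a)\<^sup>*\<^sup>* z x"
      using assms(2) unfolding poset_connected_def by blast
    then have "c z z = c x x" by (rule path)
    then show ?thesis by (rule sym)
  qed
  show ?thesis unfolding sc_def fun_eq_iff
  proof (intro allI)
    fix x y
    show "c x y = (if x = y then c z z else 0)"
    proof (cases "x = y")
      case True
      then show ?thesis using dg[of x] by simp
    next
      case False
      then show ?thesis using off[OF False] by simp
    qed
  qed
qed

context IP
begin

lemma main_forward:
  assumes conn: "poset_connected TYPE('a)"
  shows "\<exists>\<tau> \<psi>. shift_map \<tau> \<and> ia_bijective \<tau> \<and> lie_automorphism \<psi> \<and> (\<forall>f\<in>IA. \<phi> f = \<tau> (\<psi> f))"
proof -
  define z0 :: 'a where "z0 = undefined"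
  define \<mu> where "\<mu> w = \<phi> w z0 z0 + w z0 z0" for w :: "'a \<Rightarrow> 'a \<Rightarrow> bit"
  define \<psi> where "\<psi> a = \<phi> a + sc (\<mu> a)" for a
  have mu_add: "\<mu> (a + b) = \<mu> a + \<mu> b" if "a \<in> IA" "b \<in> IA" for a b
    using that by (simp add: \<mu>_def phi_plus add_ac)
  have psi_IA: "\<psi> a \<in> IA" if "a \<in> IA" for a
    using that by (simp add: \<psi>_def IA_add phi_IA sc_IA)
  have psi_add: "\<psi> (a + b) = \<psi> a + \<psi> b" if "a \<in> IA" "b \<in> IA" for a b
    using that by (simp add: \<psi>_def phi_plus mu_add sc_add add_ac)
  have psi_zero: "\<psi> 0 = 0" by (simp add: \<psi>_def \<mu>_def)
  have psi_diag: "\<psi> a z0 z0 = a z0 z0" for a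
    by (simp add: \<psi>_def \<mu>_def sc_def)
  have psi_sq: "\<psi> (mm a a) = mm (\<psi> a) (\<psi> a)" if a: "a \<in> IA" for a
  proof -
    have Qa: "Q a = sc (Q a z0 z0)" using central_diag[OF Qc[OF a] conn] .
    have d1: "mm a a z0 z0 = a z0 z0" using mm_diag[OF a a] by simp
    have d2: "mm (\<phi> a) (\<phi> a) z0 z0 = \<phi> a z0 z0" using mm_diag[OF phi_IA[OF a] phi_IA[OF a]] by simp
    have Qz: "Q a z0 z0 = \<mu> (mm a a) + \<mu> a"
      by (simp add: Q_def \<mu>_def d1 d2 add_ac)
    have cmz: "cm (\<phi> a) (sc (\<mu> a)) = 0"
      using central_cm'[OF sc_central phi_IA[OF a]] .
    have "mm (\<psi> a) (\<psi> a) = mm (\<phi> a) (\<phi> a) + sc (\<mu> a)"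
      by (simp add: \<psi>_def mm_sq_add cmz mm_sc_sc)
    moreover have "\<psi> (mm a a) = \<phi> (mm a a) + sc (\<mu> (mm a a))" by (simp add: \<psi>_def)
    moreover have "Q a = sc (\<mu> (mm a a) + \<mu> a)" using Qa by (simp only: Qz)
    then have "\<phi> (mm a a) + mm (\<phi> a) (\<phi> a) = sc (\<mu> (mm a a)) + sc (\<mu> a)"
      unfolding Q_def sc_add .
    then have "\<phi> (mm a a) = mm (\<phi> a) (\<phi> a) + (sc (\<mu> (mm a a)) + sc (\<mu> a))"
      by (rule swap_eq)
    ultimately show ?thesis by (simp add: add_ac)
  qed
  have psi_lie: "\<psi> (cm a b) = cm (\<psi> a) (\<psi> b)" if "a \<in> IA" "b \<in> IA" for a b
  proof -
    have ab: "a + b \<in> IA" using that by (simp add: IA_add)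
    have "cm a b = mm (a + b) (a + b) + mm a a + mm b b" by (simp add: mm_sq_add add_ac)
    then have "\<psi> (cm a b) = \<psi> (mm (a + b) (a + b)) + \<psi> (mm a a) + \<psi> (mm b b)"
      using that ab by (simp add: psi_add mm_IA IA_add)
    also have "\<dots> = mm (\<psi> a + \<psi> b) (\<psi> a + \<psi> b) + mm (\<psi> a) (\<psi> a) + mm (\<psi> b) (\<psi> b)"
      using that ab by (simp add: psi_sq psi_add)
    also have "\<dots> = cm (\<psi> a) (\<psi> b)" by (simp add: mm_sq_add add_ac)
    finally show ?thesis .
  qed
  have dlc: "central (\<psi> dl)"
    unfolding central_def
  proof (intro conjI ballI)
    show "\<psi> dl \<in> IA" by (simp add: psi_IA)
    fix f :: "'a \<Rightarrow> 'a \<Rightarrow> bit" assume f: "f \<in> IA"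
    then obtain b where b: "b \<in> IA" "f = \<phi> b" using phi_surj by blast
    have "cm (\<psi> dl) (\<psi> b) = \<psi> (cm dl b)" using psi_lie[of dl b] b by simp
    also have "\<dots> = 0" by (simp add: cm_def psi_zero)
    finally have "cm (\<psi> dl) (f + sc (\<mu> b)) = 0" using b by (simp add: \<psi>_def)
    then have "cm (\<psi> dl) f = 0"
      using central_cm'[OF sc_central psi_IA[of dl]] by (simp add: cm_add_right)
    then show "mm (\<psi> dl) f = mm f (\<psi> dl)" by (simp add: cm_def fun_add_eq0)
  qed
  have psi_dl: "\<psi> dl = dl"
  proof -
    have h1: "\<psi> dl = sc (\<psi> dl z0 z0)" by (rule central_diag[OF dlc conn])
    have h2: "\<psi> dl z0 z0 = 1" using psi_diag[of dl] by (simp add: dl_def)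
    have "\<psi> dl = sc 1" using h1 by (simp only: h2)
    then show ?thesis by (simp add: sc_cases)
  qed
  have dl_ne: "dl \<noteq> (0::'a \<Rightarrow> 'a \<Rightarrow> bit)" by (auto simp: dl_def fun_eq_iff)
  have mu_dl: "\<mu> dl = 0"
  proof (rule ccontr)
    assume "\<mu> dl \<noteq> 0"
    then have "\<mu> dl = 1" by simp
    then have "\<phi> dl = 0" using psi_dl by (simp add: \<psi>_def sc_cases)
    then have "\<phi> dl = \<phi> 0" by simp
    then have "(dl::'a \<Rightarrow> 'a \<Rightarrow> bit) = 0" using phi_inj[of dl 0] by simp
    then show False using dl_ne by simp
  qed
  have phi_dl: "\<phi> dl = dl" using psi_dl mu_dl by (simp add: \<psi>_def)
  have psi_ker: "c = 0" if c: "c \<in> IA" "\<psi> c = 0" for c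
  proof -
    have phic: "\<phi> c = sc (\<mu> c)" using c(2) by (simp add: \<psi>_def fun_add_eq0)
    have cz: "c z0 z0 = 0" using psi_diag[of c] c(2) by simp
    show ?thesis
    proof (cases "\<mu> c = 0")
      case True
      then have "\<phi> c = \<phi> 0" using phic by simp
      then show ?thesis using phi_inj c(1) by simp
    next
      case False
      then have "\<phi> c = \<phi> dl" using phic phi_dl by (simp add: sc_cases)
      then have "c = dl" using phi_inj c(1) by simp
      then show ?thesis using cz by (simp add: dl_def)
    qed
  qed
  have psi_inj: "inj_on \<psi> IA"
  proof (rule inj_onI)
    fix a b assume ab: "a \<in> IA" "b \<in> IA" "\<psi> a = \<psi> b"
    then have "\<psi> (a + b) = 0" by (simp add: psi_add)
    then have "a + b = 0" using psi_ker ab by (simp add: IA_add)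
    then show "a = b" by (simp add: fun_add_eq0)
  qed
  have psi_img: "\<psi> ` IA = IA"
    using endo_inj_surj[OF finite_IA _ psi_inj] psi_IA by blast
  have psi_bij: "bij_betw \<psi> IA IA" using psi_inj psi_img by (simp add: bij_betw_def)
  have lie: "lie_automorphism \<psi>"
    unfolding lie_automorphism_def ia_additive_def ia_bijective_def
  proof (intro conjI ballI)
    show "\<psi> ` IA \<subseteq> IA" using psi_img by simp
    show "bij_betw \<psi> IA IA" by (rule psi_bij)
    fix a b :: "'a \<Rightarrow> 'a \<Rightarrow> bit" assume ab: "a \<in> IA" "b \<in> IA"
    show "\<psi> (a + b) = \<psi> a + \<psi> b" using ab by (rule psi_add)
    show "\<psi> (ia_mult a b + ia_mult b a) = ia_mult (\<psi> a) (\<psi> b) + ia_mult (\<psi> b) (\<psi> a)"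
      using psi_lie[OF ab] ab psi_IA by (simp add: ia_mult_mm cm_def)
  qed
  define \<tau> where "\<tau> y = \<phi> (inv_into IA \<psi> y)" for y
  have inv_IA: "inv_into IA \<psi> y \<in> IA" if "y \<in> IA" for y
    using that psi_img by (metis inv_into_into)
  have psi_inv: "\<psi> (inv_into IA \<psi> y) = y" if "y \<in> IA" for y
    using that psi_img by (metis f_inv_into_f)
  have inv_psi: "inv_into IA \<psi> (\<psi> a) = a" if "a \<in> IA" for a
    by (rule inv_into_f_f[OF psi_inj that])
  have shift: "shift_map \<tau>"
    unfolding shift_map_def ia_additive_def
  proof (intro conjI ballI)
    show "\<tau> ` IA \<subseteq> IA" using inv_IA phi_IA by (auto simp: \<tau>_def)
    fix f g :: "'a \<Rightarrow> 'a \<Rightarrow> bit" assume fg: "f \<in> IA" "g \<in> IA"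
    have "inv_into IA \<psi> (f + g) = inv_into IA \<psi> f + inv_into IA \<psi> g"
    proof -
      have "f + g = \<psi> (inv_into IA \<psi> f + inv_into IA \<psi> g)"
        using fg by (simp add: psi_add inv_IA psi_inv)
      then show ?thesis using inv_psi[of "inv_into IA \<psi> f + inv_into IA \<psi> g"] fg
        by (simp add: IA_add inv_IA)
    qed
    then show "\<tau> (f + g) = \<tau> f + \<tau> g" using fg by (simp add: \<tau>_def phi_plus inv_IA)
  next
    fix f :: "'a \<Rightarrow> 'a \<Rightarrow> bit" assume f: "f \<in> IA"
    define a where "a = inv_into IA \<psi> f"
    have "\<tau> f - f = \<phi> a + \<psi> a" using psi_inv[OF f] by (simp add: \<tau>_def a_def fun_minus_eq)
    also have "\<dots> = sc (\<mu> a)" by (simp add: \<psi>_def)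
    finally show "\<tau> f - f \<in> ia_center" by (simp add: center_iff sc_central)
  qed
  have tau_bij: "ia_bijective \<tau>"
  proof -
    have "bij_betw (\<phi> \<circ> inv_into IA \<psi>) IA IA"
      using bij_betw_trans[OF bij_betw_inv_into[OF psi_bij]] phi_bij by (simp add: ia_bijective_def)
    moreover have "\<phi> \<circ> inv_into IA \<psi> = \<tau>" by (simp add: \<tau>_def fun_eq_iff)
    ultimately show ?thesis by (simp add: ia_bijective_def)
  qed
  have "\<forall>f\<in>IA. \<phi> f = \<tau> (\<psi> f)" by (simp add: \<tau>_def inv_psi)
  then show ?thesis using shift tau_bij lie by blast
qed

end

lemma main_backward:
  fixes \<phi> \<tau> \<psi> :: "('a::{order,finite} \<Rightarrow> 'a \<Rightarrow> bit) \<Rightarrow> ('a \<Rightarrow> 'a \<Rightarrow> bit)"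
  assumes conn: "poset_connected TYPE('a)"
    and sh: "shift_map \<tau>" and lie: "lie_automorphism \<psi>" and eq: "\<forall>f\<in>IA. \<phi> f = \<tau> (\<psi> f)"
  shows "\<phi> ` ia_idempotents \<subseteq> ia_idempotents"
proof
  fix y assume "y \<in> \<phi> ` ia_idempotents"
  then obtain e where e: "e \<in> ia_idempotents" "y = \<phi> e" by blast
  have eIA: "e \<in> IA" and ee: "mm e e = e" using e(1) by (auto simp: idem_iff)
  have psi_IA: "\<psi> a \<in> IA" if "a \<in> IA" for a
    using lie that by (auto simp: lie_automorphism_def ia_additive_def)
  have psi_surj: "\<exists>b\<in>IA. Y = \<psi> b" if "Y \<in> IA" for Y
    using lie that unfolding lie_automorphism_def ia_bijective_def bij_betw_def by blast
  have psi_lie: "\<psi> (cm a b) = cm (\<psi> a) (\<psi> b)" if "a \<in> IA" "b \<in> IA" for a b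
    using lie that psi_IA by (simp add: lie_automorphism_def ia_mult_mm cm_def)
  define f where "f = \<psi> e"
  have fIA: "f \<in> IA" using psi_IA eIA by (simp add: f_def)
  have comm: "cm (mm f f + f) Y = 0" if Y: "Y \<in> IA" for Y
  proof -
    obtain b where b: "b \<in> IA" "Y = \<psi> b" using psi_surj Y by blast
    have ce: "cm e (cm e b) = cm e b" using cm_sq[of e b] ee by simp
    have "cm (mm f f) Y = cm f (cm f (\<psi> b))" using b by (simp add: cm_sq)
    also have "\<dots> = \<psi> (cm e (cm e b))"
      using b eIA by (simp add: f_def psi_lie cm_IA)
    also have "\<dots> = cm f Y" using b eIA by (simp add: ce f_def psi_lie)
    finally show ?thesis by (simp add: cm_add_left)
  qed
  have cen: "central (mm f f + f)"
    unfolding central_def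
  proof (intro conjI ballI)
    show "mm f f + f \<in> IA" using fIA by (simp add: mm_IA IA_add)
    fix Y :: "'a \<Rightarrow> 'a \<Rightarrow> bit" assume "Y \<in> IA"
    then show "mm (mm f f + f) Y = mm Y (mm f f + f)" using comm by (simp add: cm_def fun_add_eq0)
  qed
  define z0 :: 'a where "z0 = undefined"
  have h2: "(mm f f + f) z0 z0 = 0" using mm_diag[OF fIA fIA] by simp
  have h1: "mm f f + f = sc ((mm f f + f) z0 z0)" by (rule central_diag[OF cen conn])
  have "mm f f + f = sc 0" using h1 by (simp only: h2)
  then have "mm f f + f = 0" by simp
  then have ff: "mm f f = f" by (simp add: fun_add_eq0)
  have "\<tau> f - f \<in> ia_center" using sh fIA by (simp add: shift_map_def)
  then have cc: "central (\<tau> f + f)" by (simp add: center_iff fun_minus_eq)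
  obtain k where k: "\<tau> f + f = sc k" using central_diag[OF cc conn] by blast
  have "\<tau> f = f + sc k" using swap_eq[OF k] .
  then have ye: "y = f + sc k" using e(2) eq eIA by (simp add: f_def)
  have yIA: "y \<in> IA" using ye fIA by (simp add: IA_add sc_IA)
  have "mm y y = y"
    using ye ff central_cm'[OF sc_central fIA, of k] by (simp add: mm_sq_add mm_sc_sc)
  then show "y \<in> ia_idempotents" using yIA by (simp add: idem_iff)
qed


theorem theorem5p20:
  fixes \<phi> :: "('a::{order,finite} \<Rightarrow> 'a \<Rightarrow> bit) \<Rightarrow> ('a \<Rightarrow> 'a \<Rightarrow> bit)"
  assumes "poset_connected TYPE('a)"
    and "ia_additive \<phi>" and "ia_bijective \<phi>"
  shows "\<phi> ` ia_idempotents \<subseteq> ia_idempotents \<longleftrightarrow>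
    (\<exists>\<tau> \<psi>. shift_map \<tau> \<and> ia_bijective \<tau> \<and> lie_automorphism \<psi> \<and>
       (\<forall>f\<in>IA. \<phi> f = \<tau> (\<psi> f)))"
proof
  assume pres: "\<phi> ` ia_idempotents \<subseteq> ia_idempotents"
  interpret IP \<phi> using assms(2,3) pres by unfold_locales
  show "\<exists>\<tau> \<psi>. shift_map \<tau> \<and> ia_bijective \<tau> \<and> lie_automorphism \<psi> \<and>
       (\<forall>f\<in>IA. \<phi> f = \<tau> (\<psi> f))"
    using main_forward[OF assms(1)] .
next
  assume "\<exists>\<tau> \<psi>. shift_map \<tau> \<and> ia_bijective \<tau> \<and> lie_automorphism \<psi> \<and>
       (\<forall>f\<in>IA. \<phi> f = \<tau> (\<psi> f))"
  then obtain \<tau> \<psi> where "shift_map \<tau>" "lie_automorphism \<psi>" "\<forall>f\<in>IA. \<phi> f = \<tau> (\<psi> f)"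
    by blast
  then show "\<phi> ` ia_idempotents \<subseteq> ia_idempotents"
    using main_backward[OF assms(1)] by blast
qed

end
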